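(* Let $X_1$ and $X_2$ be uniformly quasi-locally bounded semimetric spaces with basepoints $x_1$ and $x_2$ respectively, and let $\beta_j$ be the growth function of $X_j$ at $x_j$ for $j=1,2$. If $X_1$ quasi-isometrically embeds into $X_2$, then $\beta_1\preccurlyeq\beta_2$. In particular, if $X_1$ and $X_2$ are quasi-isometric then $\beta_1\sim\beta_2$.
   Context: A semimetric space is a set $X$ with $d:X\times X\to\mathbb{R}^{\ge0}\cup\{\infty\}$ with $d(x,y)=0$ iff $x=y$ and the triangle inequality (not necessarily symmetric). A basepoint is $x_0$ with $d(x_0,y)<\infty$ for all $y$. Out-ball $\overrightarrow{\mathcal{B}}_t(x)=\{y:d(x,y)\le t\}$. $X$ is uniformly quasi-locally bounded if $\sup_{x\in X}|\overrightarrow{\mathcal{B}}_t(x)|<\infty$ for all $t\in\mathbb{N}$; its growth function at $x_0$ is $\beta(t)=|\overrightarrow{\mathcal{B}}_t(x_0)|$. A map $f:X\to X'$ is a quasi-isometric embedding if there are $1\le\lambda<\infty$, $0<\epsilon<\infty$ with $\frac1\lambda d(x,y)-\epsilon\le d'(f(x),f(y))\le\lambda d(x,y)+\epsilon$ for all $x,y$; a quasi-isometry if moreover for some $0\le\mu<\infty$ every $x'\in X'$ has some $x$ with $\max(d'(x',f(x)),d'(f(x),x'))\le\mu$. For monotone non-decreasing $\alpha_1,\alpha_2:\mathbb{N}\to\mathbb{N}$, $\alpha_1\preccurlyeq\alpha_2$ means there are natural numbers $k_1,k_2\ge1$ with $\alpha_1(t)\le k_1\alpha_2(k_2t)$ for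 all $t$, and $\alpha_1\sim\alpha_2$ means both $\alpha_1\preccurlyeq\alpha_2$ and $\alpha_2\preccurlyeq\alpha_1$. *)

theory Defs
  imports "HOL-Library.Extended_Real"
begin

definition semimetric :: "'a set \<Rightarrow> ('a \<Rightarrow> 'a \<Rightarrow> ereal) \<Rightarrow> bool" where
  "semimetric X d \<longleftrightarrow>
     (\<forall>x\<in>X. \<forall>y\<in>X. 0 \<le> d x y) \<and>
     (\<forall>x\<in>X. \<forall>y\<in>X. d x y = 0 \<longleftrightarrow> x = y) \<and>
     (\<forall>x\<in>X. \<forall>y\<in>X. \<forall>z\<in>X. d x z \<le> d x y + d y z)"

definition basepoint :: "'a set \<Rightarrow> ('a \<Rightarrow> 'a \<Rightarrow> ereal) \<Rightarrow> 'a \<Rightarrow> bool" where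
  "basepoint X d x0 \<longleftrightarrow> x0 \<in> X \<and> (\<forall>y\<in>X. d x0 y < \<infinity>)"

definition out_ball :: "'a set \<Rightarrow> ('a \<Rightarrow> 'a \<Rightarrow> ereal) \<Rightarrow> real \<Rightarrow> 'a \<Rightarrow> 'a set" where
  "out_ball X d t x = {y\<in>X. d x y \<le> ereal t}"

definition unif_quasi_loc_bounded :: "'a set \<Rightarrow> ('a \<Rightarrow> 'a \<Rightarrow> ereal) \<Rightarrow> bool" where
  "unif_quasi_loc_bounded X d \<longleftrightarrow>
     (\<forall>t::nat. \<exists>M::nat. \<forall>x\<in>X. finite (out_ball X d (real t) x) \<and> card (out_ball X d (real t) x) \<le> M)"

definition growth :: "'a set \<Rightarrow> ('a \<Rightarrow> 'a \<Rightarrow> ereal) \<Rightarrow> 'a \<Rightarrow> nat \<Rightarrow> nat" where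
  "growth X d x0 t = card (out_ball X d (real t) x0)"

definition growth_le :: "(nat \<Rightarrow> nat) \<Rightarrow> (nat \<Rightarrow> nat) \<Rightarrow> bool" (infix "\<preceq>\<^sub>g" 50) where
  "\<alpha>1 \<preceq>\<^sub>g \<alpha>2 \<longleftrightarrow> (\<exists>k1 k2::nat. k1 \<ge> 1 \<and> k2 \<ge> 1 \<and> (\<forall>t. \<alpha>1 t \<le> k1 * \<alpha>2 (k2 * t)))"

definition growth_equiv :: "(nat \<Rightarrow> nat) \<Rightarrow> (nat \<Rightarrow> nat) \<Rightarrow> bool" (infix "\<sim>\<^sub>g" 50) where
  "\<alpha>1 \<sim>\<^sub>g \<alpha>2 \<longleftrightarrow> \<alpha>1 \<preceq>\<^sub>g \<alpha>2 \<and> \<alpha>2 \<preceq>\<^sub>g \<alpha>1"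

definition qi_embedding ::
  "'a set \<Rightarrow> ('a \<Rightarrow> 'a \<Rightarrow> ereal) \<Rightarrow> 'b set \<Rightarrow> ('b \<Rightarrow> 'b \<Rightarrow> ereal) \<Rightarrow> ('a \<Rightarrow> 'b) \<Rightarrow> bool" where
  "qi_embedding X d X' d' f \<longleftrightarrow> f ` X \<subseteq> X' \<and>
     (\<exists>lam eps::real. 1 \<le> lam \<and> 0 < eps \<and>
       (\<forall>x\<in>X. \<forall>y\<in>X. ereal (1/lam) * d x y - ereal eps \<le> d' (f x) (f y) \<and>
                      d' (f x) (f y) \<le> ereal lam * d x y + ereal eps))"

definition quasi_isometry ::
  "'a set \<Rightarrow> ('a \<Rightarrow> 'a \<Rightarrow> ereal) \<Rightarrow> 'b set \<Rightarrow> ('b \<Rightarrow> 'b \<Rightarrow> ereal) \<Rightarrow> ('a \<Rightarrow> 'b) \<Rightarrow> bool" where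
  "quasi_isometry X d X' d' f \<longleftrightarrow> qi_embedding X d X' d' f \<and>
     (\<exists>\<mu>::real. 0 \<le> \<mu> \<and> (\<forall>x'\<in>X'. \<exists>x\<in>X. max (d' x' (f x)) (d' (f x) x') \<le> ereal \<mu>))"

end

theory Submission
  imports Defs
begin

lemma count_lemma:
  assumes "finite S" "h ` A \<subseteq> S"
    "\<forall>y\<in>A. \<forall>z\<in>A. h y = h z \<longrightarrow> z \<in> B y"
    "\<forall>y\<in>A. finite (B y) \<and> card (B y) \<le> M"
  shows "finite A \<and> card A \<le> M * card S"
proof -
  let ?F = "\<lambda>s. {z\<in>A. h z = s}"
  have sub: "A \<subseteq> (\<Union>s\<in>S. ?F s)" using assms(2) by auto
  have fin: "finite (?F s) \<and> card (?F s) \<le> M" for s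
  proof (cases "?F s = {}")
    case True show ?thesis by (metis True card.empty finite.emptyI zero_le)
  next
    case False
    then obtain y where y: "y \<in> A" "h y = s" by auto
    have "?F s \<subseteq> B y" using assms(3) y by auto
    moreover have "finite (B y)" "card (B y) \<le> M" using assms(4) y by auto
    ultimately show ?thesis by (meson card_mono order_trans rev_finite_subset)
  qed
  have fU: "finite (\<Union>s\<in>S. ?F s)" using fin assms(1) by blast
  hence fA: "finite A" using sub finite_subset by blast
  have "card A \<le> card (\<Union>s\<in>S. ?F s)" using sub fU card_mono by blast
  also have "\<dots> \<le> (\<Sum>s\<in>S. card (?F s))" using card_UN_le assms(1) by blast
  also have "\<dots> \<le> (\<Sum>s\<in>S. M)" by (rule sum_mono) (use fin in auto)
  also have "\<dots> = M * card S" by simp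
  finally show ?thesis using fA by simp
qed

lemma ball_mono_card:
  assumes "unif_quasi_loc_bounded X d" "s \<le> t" "b \<in> X"
  shows "finite (out_ball X d (real t) b) \<and> card (out_ball X d (real s) b) \<le> card (out_ball X d (real t) b)"
proof -
  have sub: "out_ball X d (real s) b \<subseteq> out_ball X d (real t) b"
    unfolding out_ball_def using assms(2) order_trans by fastforce
  have f: "finite (out_ball X d (real t) b)" using assms(1,3) unfolding unif_quasi_loc_bounded_def by blast
  then show ?thesis using sub card_mono by blast
qed

lemma dom:
  assumes U1: "unif_quasi_loc_bounded X d" and U2: "unif_quasi_loc_bounded Y e"
    and b: "b \<in> Y" "e b b = 0" and a: "a \<in> X" and hXY: "h ` X \<subseteq> Y" and C: "C \<ge> 0" and L: "L \<ge> 0"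
    and H1: "\<forall>y\<in>X. \<forall>t::nat. d a y \<le> ereal (real t) \<longrightarrow> e b (h y) \<le> ereal (C + L * real t)"
    and H2: "\<forall>y\<in>X. \<forall>z\<in>X. h y = h z \<longrightarrow> d y z \<le> ereal R"
  shows "growth X d a \<preceq>\<^sub>g growth Y e b"
proof -
  obtain M where M: "\<forall>x\<in>X. finite (out_ball X d (real (nat \<lceil>R\<rceil>)) x) \<and> card (out_ball X d (real (nat \<lceil>R\<rceil>)) x) \<le> M"
    using U1 unfolding unif_quasi_loc_bounded_def by blast
  define k2 where "k2 = nat \<lceil>C + L\<rceil> + 1"
  define k1 where "k1 = max 1 (max M (growth X d a 0))"
  have g0: "growth Y e b 0 \<ge> 1"
  proof -
    have "b \<in> out_ball Y e (real 0) b" using b by (simp add: out_ball_def)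
    moreover have "finite (out_ball Y e (real 0) b)" using U2 b unfolding unif_quasi_loc_bounded_def by blast
    ultimately show ?thesis unfolding growth_def
      by (metis One_nat_def Suc_leI card_gt_0_iff empty_iff of_nat_0)
  qed
  have "growth X d a t \<le> k1 * growth Y e b (k2 * t)" for t
  proof (cases "t = 0")
    case True
    have "growth X d a 0 \<le> growth X d a 0 * growth Y e b 0" using g0 by simp
    also have "\<dots> \<le> k1 * growth Y e b 0" unfolding k1_def by (intro mult_right_mono) auto
    finally show ?thesis using True by simp
  next
    case False
    let ?A = "out_ball X d (real t) a" and ?S = "out_ball Y e (real (k2 * t)) b"
    have ck: "C + L * real t \<le> real (k2 * t)"
    proof -
      have "C + L * real t \<le> (C + L) * real t" proof -
        have "C * 1 \<le> C * real t" using False C by (intro mult_left_mono) auto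
        then show ?thesis by (simp add: algebra_simps)
      qed
      also have "\<dots> \<le> real k2 * real t" unfolding k2_def
        by (intro mult_right_mono) (linarith, simp)
      finally show ?thesis by simp
    qed
    have fS: "finite ?S" using U2 b unfolding unif_quasi_loc_bounded_def by blast
    have hAS: "h ` ?A \<subseteq> ?S"
    proof
      fix w assume "w \<in> h ` ?A"
      then obtain y where y: "y \<in> X" "d a y \<le> ereal (real t)" "w = h y" by (auto simp: out_ball_def)
      have "e b w \<le> ereal (C + L * real t)" using H1 y by blast
      also have "\<dots> \<le> ereal (real (k2 * t))" using ck by simp
      finally show "w \<in> ?S" using hXY y by (auto simp: out_ball_def)
    qed
    have fib: "\<forall>y\<in>?A. \<forall>z\<in>?A. h y = h z \<longrightarrow> z \<in> out_ball X d (real (nat \<lceil>R\<rceil>)) y"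
    proof (intro ballI impI)
      fix y z assume y: "y \<in> ?A" and z: "z \<in> ?A" and hz: "h y = h z"
      have "d y z \<le> ereal R" using H2 y z hz by (auto simp: out_ball_def)
      also have "\<dots> \<le> ereal (real (nat \<lceil>R\<rceil>))" by simp linarith
      finally show "z \<in> out_ball X d (real (nat \<lceil>R\<rceil>)) y" using z by (auto simp: out_ball_def)
    qed
    have "card ?A \<le> M * card ?S"
      using count_lemma[OF fS hAS fib, of M] M by (auto simp: out_ball_def)
    also have "\<dots> \<le> k1 * card ?S" unfolding k1_def by (intro mult_right_mono) auto
    finally show ?thesis unfolding growth_def .
  qed
  moreover have "k1 \<ge> 1" "k2 \<ge> 1" unfolding k1_def k2_def by auto
  ultimately show ?thesis unfolding growth_le_def by blast
qed

lemma fin_er: "0 \<le> (a::ereal) \<Longrightarrow> a \<le> ereal t \<Longrightarrow> \<exists>r. a = ereal r \<and> 0 \<le> r \<and> r \<le> t"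
  by (cases a) auto

lemma inv_er:
  assumes "1 \<le> lam" "0 \<le> a" "ereal (1/lam) * a - ereal eps \<le> ereal B"
  shows "a \<le> ereal (lam * (B + eps))"
proof (cases a)
  case (real r)
  then have "r / lam - eps \<le> B" using assms by simp
  then have "r \<le> lam * (B + eps)" using assms(1) by (simp add: field_simps)
  then show ?thesis using real by simp
next
  case PInf
  have h: "ereal (1/lam) * a - ereal eps = \<infinity>" using PInf assms(1) by simp
  show ?thesis using h assms(3) by (metis PInfty_neq_ereal(1) ereal_infty_less_eq(1))
next
  case MInf then show ?thesis using assms(2) by simp
qed

lemma dir1:
  assumes S1: "semimetric X1 d1" and U1: "unif_quasi_loc_bounded X1 d1" and B1: "basepoint X1 d1 x1"
    and S2: "semimetric X2 d2" and U2: "unif_quasi_loc_bounded X2 d2" and B2: "basepoint X2 d2 x2"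
    and Q: "qi_embedding X1 d1 X2 d2 f"
  shows "growth X1 d1 x1 \<preceq>\<^sub>g growth X2 d2 x2"
proof -
  obtain lam eps where le: "1 \<le> lam" "0 < eps" and fX: "f ` X1 \<subseteq> X2"
    and bd: "\<forall>x\<in>X1. \<forall>y\<in>X1. ereal (1/lam) * d1 x y - ereal eps \<le> d2 (f x) (f y) \<and>
                      d2 (f x) (f y) \<le> ereal lam * d1 x y + ereal eps"
    using Q unfolding qi_embedding_def by blast
  have x1: "x1 \<in> X1" and x2: "x2 \<in> X2" using B1 B2 unfolding basepoint_def by auto
  have n1: "\<forall>x\<in>X1. \<forall>y\<in>X1. 0 \<le> d1 x y" and z1: "\<forall>x\<in>X1. d1 x x = 0"
    using S1 unfolding semimetric_def by auto
  have n2: "\<forall>x\<in>X2. \<forall>y\<in>X2. 0 \<le> d2 x y" and z2: "\<forall>x\<in>X2. d2 x x = 0"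
    and tr2: "\<forall>x\<in>X2. \<forall>y\<in>X2. \<forall>z\<in>X2. d2 x z \<le> d2 x y + d2 y z"
    using S2 unfolding semimetric_def by auto
  have fx1: "f x1 \<in> X2" using fX x1 by auto
  have "d2 x2 (f x1) < \<infinity>" using B2 fx1 unfolding basepoint_def by auto
  moreover have "0 \<le> d2 x2 (f x1)" using n2 x2 fx1 by blast
  ultimately obtain c where c: "d2 x2 (f x1) = ereal c" "0 \<le> c"
    by (cases "d2 x2 (f x1)") auto
  show ?thesis
  proof (rule dom[OF U1 U2 x2 z2[rule_format, OF x2] x1 fX, where C="c + eps" and L=lam and R="lam * eps"])
    show "0 \<le> c + eps" using c le by simp
    show "0 \<le> lam" using le by simp
    show "\<forall>y\<in>X1. \<forall>t::nat. d1 x1 y \<le> ereal (real t) \<longrightarrow> d2 x2 (f y) \<le> ereal (c + eps + lam * real t)"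
    proof (intro ballI allI impI)
      fix y t assume y: "y \<in> X1" and dt: "d1 x1 y \<le> ereal (real t)"
      obtain r where r: "d1 x1 y = ereal r" "r \<le> real t" using fin_er[OF _ dt] n1 x1 y by blast
      have fy: "f y \<in> X2" using fX y by auto
      have "d2 (f x1) (f y) \<le> ereal lam * d1 x1 y + ereal eps" using bd x1 y by blast
      then have "d2 (f x1) (f y) \<le> ereal (lam * r + eps)" using r by simp
      moreover have "lam * r \<le> lam * real t" using r le by (intro mult_left_mono) auto
      ultimately have "d2 (f x1) (f y) \<le> ereal (lam * real t + eps)"
        using order_trans ereal_less_eq(3) by (metis add_le_cancel_right)
      then have "d2 x2 (f x1) + d2 (f x1) (f y) \<le> ereal (c + eps + lam * real t)"
        using c by (metis add_left_mono ereal_plus_eq_PInfty le_ereal_le plus_ereal.simps(1) add.commute add.left_commute order_refl)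
      then show "d2 x2 (f y) \<le> ereal (c + eps + lam * real t)"
        using tr2 x2 fx1 fy order_trans by blast
    qed
    show "\<forall>y\<in>X1. \<forall>z\<in>X1. f y = f z \<longrightarrow> d1 y z \<le> ereal (lam * eps)"
    proof (intro ballI impI)
      fix y z assume y: "y \<in> X1" and z: "z \<in> X1" and e: "f y = f z"
      have "ereal (1/lam) * d1 y z - ereal eps \<le> d2 (f y) (f z)" using bd y z by blast
      moreover have "d2 (f y) (f z) = ereal 0" using e z2 fX z by auto
      ultimately have "ereal (1/lam) * d1 y z - ereal eps \<le> ereal 0" by simp
      then show "d1 y z \<le> ereal (lam * eps)" using inv_er[OF le(1)] n1 y z by fastforce
    qed
  qed
qed

lemma dir2:
  assumes S1: "semimetric X1 d1" and U1: "unif_quasi_loc_bounded X1 d1" and B1: "basepoint X1 d1 x1"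
    and S2: "semimetric X2 d2" and U2: "unif_quasi_loc_bounded X2 d2" and B2: "basepoint X2 d2 x2"
    and Q: "quasi_isometry X1 d1 X2 d2 f"
  shows "growth X2 d2 x2 \<preceq>\<^sub>g growth X1 d1 x1"
proof -
  obtain lam eps where le: "1 \<le> lam" "0 < eps" and fX: "f ` X1 \<subseteq> X2"
    and bd: "\<forall>x\<in>X1. \<forall>y\<in>X1. ereal (1/lam) * d1 x y - ereal eps \<le> d2 (f x) (f y) \<and>
                      d2 (f x) (f y) \<le> ereal lam * d1 x y + ereal eps"
    using Q unfolding quasi_isometry_def qi_embedding_def by blast
  obtain mu where mu: "0 \<le> mu" "\<forall>x'\<in>X2. \<exists>x\<in>X1. max (d2 x' (f x)) (d2 (f x) x') \<le> ereal mu"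
    using Q unfolding quasi_isometry_def by blast
  define g where "g x' = (SOME x. x \<in> X1 \<and> max (d2 x' (f x)) (d2 (f x) x') \<le> ereal mu)" for x'
  have g: "g x' \<in> X1 \<and> d2 x' (f (g x')) \<le> ereal mu \<and> d2 (f (g x')) x' \<le> ereal mu" if "x' \<in> X2" for x'
  proof -
    have "\<exists>x. x \<in> X1 \<and> max (d2 x' (f x)) (d2 (f x) x') \<le> ereal mu" using mu that by blast
    then have "g x' \<in> X1 \<and> max (d2 x' (f (g x'))) (d2 (f (g x')) x') \<le> ereal mu"
      unfolding g_def by (rule someI_ex)
    then show ?thesis by simp
  qed
  have x1: "x1 \<in> X1" and x2: "x2 \<in> X2" using B1 B2 unfolding basepoint_def by auto
  have n1: "\<forall>x\<in>X1. \<forall>y\<in>X1. 0 \<le> d1 x y" and z1: "\<forall>x\<in>X1. d1 x x = 0"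
    and tr1: "\<forall>x\<in>X1. \<forall>y\<in>X1. \<forall>z\<in>X1. d1 x z \<le> d1 x y + d1 y z"
    using S1 unfolding semimetric_def by auto
  have n2: "\<forall>x\<in>X2. \<forall>y\<in>X2. 0 \<le> d2 x y"
    and tr2: "\<forall>x\<in>X2. \<forall>y\<in>X2. \<forall>z\<in>X2. d2 x z \<le> d2 x y + d2 y z"
    using S2 unfolding semimetric_def by auto
  obtain z where z: "z \<in> X1" "max (d2 x2 (f z)) (d2 (f z) x2) \<le> ereal mu" using mu x2 by blast
  have fz: "f z \<in> X2" using fX z by auto
  obtain a1 where a1: "d2 (f z) x2 = ereal a1" "a1 \<le> mu"
    using fin_er[of "d2 (f z) x2" mu] n2 fz x2 z by auto
  have "d1 x1 z < \<infinity>" using B1 z unfolding basepoint_def by auto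
  moreover have "0 \<le> d1 x1 z" using n1 x1 z by blast
  ultimately obtain c where c: "d1 x1 z = ereal c" "0 \<le> c"
    by (cases "d1 x1 z") auto
  have gX: "g ` X2 \<subseteq> X1" using g by auto
  show ?thesis
  proof (rule dom[OF U2 U1 x1 z1[rule_format, OF x1] x2 gX, where C="c + lam * (2 * mu + eps)" and L=lam and R="2 * mu"])
    show "0 \<le> c + lam * (2 * mu + eps)" using c le mu by simp
    show "0 \<le> lam" using le by simp
    show "\<forall>y\<in>X2. \<forall>t::nat. d2 x2 y \<le> ereal (real t) \<longrightarrow> d1 x1 (g y) \<le> ereal (c + lam * (2 * mu + eps) + lam * real t)"
    proof (intro ballI allI impI)
      fix y t assume y: "y \<in> X2" and dt: "d2 x2 y \<le> ereal (real t)"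
      obtain a2 where a2: "d2 x2 y = ereal a2" "a2 \<le> real t" using fin_er[OF _ dt] n2 x2 y by blast
      have gy: "g y \<in> X1" "d2 y (f (g y)) \<le> ereal mu" using g y by auto
      have fgy: "f (g y) \<in> X2" using fX gy by auto
      obtain a3 where a3: "d2 y (f (g y)) = ereal a3" "a3 \<le> mu"
        using fin_er[OF _ gy(2)] n2 y fgy by blast
      have "d2 (f z) (f (g y)) \<le> d2 (f z) x2 + d2 x2 (f (g y))" using tr2 fz x2 fgy by blast
      moreover have "d2 x2 (f (g y)) \<le> d2 x2 y + d2 y (f (g y))" using tr2 y x2 fgy by blast
      ultimately have "d2 (f z) (f (g y)) \<le> ereal (a1 + (a2 + a3))" using a1 a2 a3
        by (metis add_left_mono order_trans plus_ereal.simps(1))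
      moreover have "a1 + (a2 + a3) \<le> 2 * mu + real t" using a1 a2 a3 by simp
      ultimately have dd: "d2 (f z) (f (g y)) \<le> ereal (2 * mu + real t)" using order_trans ereal_less_eq(3) by blast
      have "ereal (1/lam) * d1 z (g y) - ereal eps \<le> d2 (f z) (f (g y))" using bd z gy by blast
      then have "d1 z (g y) \<le> ereal (lam * (2 * mu + real t + eps))"
        using inv_er[OF le(1)] n1 z gy dd order_trans by blast
      moreover have "d1 x1 (g y) \<le> d1 x1 z + d1 z (g y)" using tr1 x1 z gy by blast
      ultimately have "d1 x1 (g y) \<le> ereal (c + lam * (2 * mu + real t + eps))" using c
        by (metis add_left_mono order_trans plus_ereal.simps(1))
      then show "d1 x1 (g y) \<le> ereal (c + lam * (2 * mu + eps) + lam * real t)"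
        by (simp add: algebra_simps)
    qed
    show "\<forall>y\<in>X2. \<forall>w\<in>X2. g y = g w \<longrightarrow> d2 y w \<le> ereal (2 * mu)"
    proof (intro ballI impI)
      fix y w assume y: "y \<in> X2" and w: "w \<in> X2" and e: "g y = g w"
      have gy: "g y \<in> X1" "d2 y (f (g y)) \<le> ereal mu" using g y by auto
      have gw: "d2 (f (g w)) w \<le> ereal mu" using g w by auto
      have fgy: "f (g y) \<in> X2" using fX gy by auto
      obtain b1 where b1: "d2 y (f (g y)) = ereal b1" "b1 \<le> mu"
        using fin_er[OF _ gy(2)] n2 y fgy by blast
      obtain b2 where b2: "d2 (f (g y)) w = ereal b2" "b2 \<le> mu"
        using fin_er[OF _ gw] n2 w fgy e by auto
      have "d2 y w \<le> d2 y (f (g y)) + d2 (f (g y)) w" using tr2 y w fgy by blast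
      then show "d2 y w \<le> ereal (2 * mu)" using b1 b2 by (simp add: order_trans)
    qed
  qed
qed

theorem proposition6p4:
  fixes X1 :: "'a set" and d1 :: "'a \<Rightarrow> 'a \<Rightarrow> ereal" and x1 :: 'a
    and X2 :: "'b set" and d2 :: "'b \<Rightarrow> 'b \<Rightarrow> ereal" and x2 :: 'b
  assumes "semimetric X1 d1" and "unif_quasi_loc_bounded X1 d1" and "basepoint X1 d1 x1"
    and "semimetric X2 d2" and "unif_quasi_loc_bounded X2 d2" and "basepoint X2 d2 x2"
  shows "((\<exists>f. qi_embedding X1 d1 X2 d2 f) \<longrightarrow> growth X1 d1 x1 \<preceq>\<^sub>g growth X2 d2 x2)
    \<and> ((\<exists>f. quasi_isometry X1 d1 X2 d2 f) \<longrightarrow> growth X1 d1 x1 \<sim>\<^sub>g growth X2 d2 x2)"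
  using dir1[OF assms] dir2[OF assms] unfolding growth_equiv_def quasi_isometry_def
  by blast

end
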